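(* Let $G$ be a three-dimensional space group and $\mathbf{q}$ a point whose site-symmetry group $G_\mathbf{q}$ is maximal and isomorphic to one of the point groups $O$, $T_d$ or $O_h$ (the only crystallographic point groups with four-dimensional irreducible representations). Then there is no point $\mathbf{q}_0$ whose site-symmetry group $G_{\mathbf{q}_0}$ is a subgroup of index two in $G_\mathbf{q}$.
   Context: A space group $G$ is a group of affine isometries of $\mathbb{R}^3$ containing a Bravais lattice of translations. The site-symmetry group of a point $\mathbf{q}$ is $G_\mathbf{q}=\{g\in G:g\mathbf{q}=\mathbf{q}\}$; it is maximal if there is no finite group $H\neq G_\mathbf{q}$ with $G_\mathbf{q}\subset H\subset G$. *)

theory Defs
  imports "HOL-Analysis.Analysis" "HOL-Algebra.Coset"
begin

type_synonym pt = "real^3"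
type_synonym aff = "pt \<Rightarrow> pt"

definition affine_isometry :: "aff \<Rightarrow> bool" where
  "affine_isometry g \<longleftrightarrow>
     (\<exists>A::real^3^3. \<exists>t::pt. orthogonal_matrix A \<and> (\<forall>x. g x = A *v x + t))"

definition transl :: "pt \<Rightarrow> aff" where
  "transl v = (\<lambda>x. x + v)"

definition bravais_lattice :: "pt set \<Rightarrow> bool" where
  "bravais_lattice L \<longleftrightarrow>
     (\<exists>B::real^3^3. invertible B \<and>
        L = range (\<lambda>n::3 \<Rightarrow> int. B *v (\<chi> i. of_int (n i))))"

definition fg :: "aff set \<Rightarrow> aff monoid" where
  "fg H = \<lparr>carrier = H, monoid.mult = (\<circ>), one = id\<rparr>"

definition space_group :: "aff set \<Rightarrow> bool" where
  "space_group G \<longleftrightarrow>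
     (\<forall>g\<in>G. affine_isometry g) \<and>
     id \<in> G \<and>
     (\<forall>g\<in>G. \<forall>h\<in>G. g \<circ> h \<in> G) \<and>
     (\<forall>g\<in>G. \<exists>h\<in>G. g \<circ> h = id \<and> h \<circ> g = id) \<and>
     bravais_lattice {v. transl v \<in> G}"

definition site :: "aff set \<Rightarrow> pt \<Rightarrow> aff set" where
  "site G q = {g \<in> G. g q = q}"

definition maximal_site :: "aff set \<Rightarrow> pt \<Rightarrow> bool" where
  "maximal_site G q \<longleftrightarrow>
     (\<forall>H. subgroup H (fg G) \<and> finite H \<and> site G q \<subseteq> H \<longrightarrow> H = site G q)"

definition mgrp :: "(real^3^3) set \<Rightarrow> (real^3^3) monoid" where
  "mgrp P = \<lparr>carrier = P, monoid.mult = (**), one = mat 1\<rparr>"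

definition cube :: "pt set" where
  "cube = {x. \<forall>i. \<bar>x $ i\<bar> \<le> 1}"

definition tetra_vertices :: "pt set" where
  "tetra_vertices = {vector [1,1,1], vector [1,-1,-1], vector [-1,1,-1], vector [-1,-1,1]}"

definition pg_Oh :: "(real^3^3) set" where
  "pg_Oh = {A. orthogonal_matrix A \<and> (\<lambda>x. A *v x) ` cube = cube}"

definition pg_O :: "(real^3^3) set" where
  "pg_O = {A \<in> pg_Oh. det A = 1}"

definition pg_Td :: "(real^3^3) set" where
  "pg_Td = {A. orthogonal_matrix A \<and> (\<lambda>x. A *v x) ` tetra_vertices = tetra_vertices}"

end

theory Submission
  imports Defs
begin


lemma triple_cross: "cross3 (cross3 a b) c = (a \<bullet> c) *\<^sub>R b - (b \<bullet> c) *\<^sub>R a"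
  by (simp add: cross3_simps forall_3)

lemma frame_decomp:
  fixes u w x :: "real^3"
  assumes u: "norm u = 1" and w: "norm w = 1" and uw: "u \<bullet> w = 0"
  shows "x = (u \<bullet> x) *\<^sub>R u + (w \<bullet> x) *\<^sub>R w + ((cross3 u w) \<bullet> x) *\<^sub>R (cross3 u w)"
proof -
  define k where "k = cross3 u w"
  define z where "z = x - ((u \<bullet> x) *\<^sub>R u + (w \<bullet> x) *\<^sub>R w + (k \<bullet> x) *\<^sub>R k)"
  have uu: "u \<bullet> u = 1" using u by (simp add: dot_square_norm)
  have ww: "w \<bullet> w = 1" using w by (simp add: dot_square_norm)
  have ku: "k \<bullet> u = 0" "k \<bullet> w = 0" unfolding k_def by (simp_all add: dot_cross_self)
  have nk2: "(norm k)^2 = 1" using norm_cross_dot[of u w] u w uw unfolding k_def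
    by simp
  have nk: "norm k = 1" using nk2 norm_ge_zero[of k] by (simp add: power2_eq_1_iff)
  have kk: "k \<bullet> k = 1" using nk by (simp add: dot_square_norm)
  have zu: "u \<bullet> z = 0" unfolding z_def using uu uw ku
    by (simp add: inner_diff_right inner_add_right inner_commute)
  have zw: "w \<bullet> z = 0" unfolding z_def using ww uw ku
    by (simp add: inner_diff_right inner_add_right inner_commute)
  have zk: "k \<bullet> z = 0" unfolding z_def using kk ku
    by (simp add: inner_diff_right inner_add_right inner_commute)
  have "cross3 k z = 0" unfolding k_def triple_cross using zu zw by simp
  then have "(norm z)^2 = 0" using norm_cross_dot[of k z] nk zk by simp
  then have "z = 0" by simp
  then show ?thesis unfolding z_def k_def by simp
qed

lemma orth_inner:
  fixes M :: "real^3^3"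
  assumes "orthogonal_matrix M"
  shows "(M *v x) \<bullet> (M *v y) = x \<bullet> y"
  using orthogonal_transformation_matrix[of "(*v) M"] assms
  by (simp add: orthogonal_transformation_def matrix_vector_mul_linear)

lemma rot_plane:
  fixes R :: "real^3^3" and u w :: "real^3"
  assumes oR: "orthogonal_matrix R" and dR: "det R = 1" and Ru: "R *v u = u"
    and u: "norm u = 1" and w: "norm w = 1" and uw: "u \<bullet> w = 0"
  shows "R *v w = (w \<bullet> (R *v w)) *\<^sub>R w + (cross3 u w \<bullet> (R *v w)) *\<^sub>R cross3 u w"
    and "R *v cross3 u w = (w \<bullet> (R *v w)) *\<^sub>R cross3 u w - (cross3 u w \<bullet> (R *v w)) *\<^sub>R w"
proof -
  have uu: "u \<bullet> u = 1" using u by (simp add: dot_square_norm)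
  have c: "cross3 u (R *v x) = R *v cross3 u x" for x
    using cross_orthogonal_matrix[OF oR, of u x] dR Ru by simp
  have uRw: "u \<bullet> (R *v w) = 0" using orth_inner[OF oR, of u w] Ru uw by simp
  show 1: "R *v w = (w \<bullet> (R *v w)) *\<^sub>R w + (cross3 u w \<bullet> (R *v w)) *\<^sub>R cross3 u w"
    using frame_decomp[OF u w uw, of "R *v w"] uRw by simp
  have uuw: "cross3 u (cross3 u w) = - w"
    using triple_cross[of u w u] uu uw cross_skew[of u "cross3 u w"] by (simp add: inner_commute)
  have "R *v cross3 u w = cross3 u (R *v w)" using c by simp
  also have "\<dots> = (w \<bullet> (R *v w)) *\<^sub>R cross3 u w - (cross3 u w \<bullet> (R *v w)) *\<^sub>R w"
    by (subst 1) (simp add: cross_add_right cross_mult_right uuw)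
  finally show "R *v cross3 u w = (w \<bullet> (R *v w)) *\<^sub>R cross3 u w - (cross3 u w \<bullet> (R *v w)) *\<^sub>R w" .
qed

lemma rot_comm_unit:
  fixes M N :: "real^3^3" and u w :: "real^3"
  assumes oM: "orthogonal_matrix M" and dM: "det M = 1" and Mu: "M *v u = u"
    and oN: "orthogonal_matrix N" and dN: "det N = 1" and Nu: "N *v u = u"
    and u: "norm u = 1" and w: "norm w = 1" and uw: "u \<bullet> w = 0"
  shows "M ** N = N ** M"
proof -
  define k where "k = cross3 u w"
  define a1 where "a1 = w \<bullet> (M *v w)"
  define b1 where "b1 = k \<bullet> (M *v w)"
  define a2 where "a2 = w \<bullet> (N *v w)"
  define b2 where "b2 = k \<bullet> (N *v w)"
  have Mw: "M *v w = a1 *\<^sub>R w + b1 *\<^sub>R k" and Mk: "M *v k = a1 *\<^sub>R k - b1 *\<^sub>R w"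
    using rot_plane[OF oM dM Mu u w uw] unfolding a1_def b1_def k_def by auto
  have Nw: "N *v w = a2 *\<^sub>R w + b2 *\<^sub>R k" and Nk: "N *v k = a2 *\<^sub>R k - b2 *\<^sub>R w"
    using rot_plane[OF oN dN Nu u w uw] unfolding a2_def b2_def k_def by auto
  show ?thesis
  proof (subst matrix_eq, intro allI)
    fix x :: "real^3"
    have x: "x = (u \<bullet> x) *\<^sub>R u + (w \<bullet> x) *\<^sub>R w + (k \<bullet> x) *\<^sub>R k"
      using frame_decomp[OF u w uw] unfolding k_def by simp
    have "(M ** N) *v x = M *v (N *v ((u \<bullet> x) *\<^sub>R u + (w \<bullet> x) *\<^sub>R w + (k \<bullet> x) *\<^sub>R k))"
      by (subst x) (simp add: matrix_vector_mul_assoc)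
    also have "\<dots> = (N ** M) *v ((u \<bullet> x) *\<^sub>R u + (w \<bullet> x) *\<^sub>R w + (k \<bullet> x) *\<^sub>R k)"
      by (simp add: matrix_vector_mul_assoc[symmetric] matrix_vector_right_distrib
          matrix_vector_mult_scaleR Mu Nu Mw Mk Nw Nk algebra_simps)
    finally show "(M ** N) *v x = (N ** M) *v x" using x by simp
  qed
qed

lemma sq_comm:
  fixes X Y :: "real^3^3" and v :: "real^3"
  assumes oX: "orthogonal_matrix X" and Xv: "X *v v = v"
    and oY: "orthogonal_matrix Y" and Yv: "Y *v v = v" and v: "v \<noteq> 0"
  shows "(X ** X) ** (Y ** Y) = (Y ** Y) ** (X ** X)"
proof -
  define u where "u = (1 / norm v) *\<^sub>R v"
  have u: "norm u = 1" using v unfolding u_def by simp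
  have Xu: "X *v u = u" and Yu: "Y *v u = u" unfolding u_def
    by (simp_all add: matrix_vector_mult_scaleR Xv Yv)
  obtain w0 where w0: "w0 \<noteq> 0" "orthogonal u w0"
    using orthogonal_to_vector_exists[of u] by auto
  define w where "w = (1 / norm w0) *\<^sub>R w0"
  have w: "norm w = 1" using w0 unfolding w_def by simp
  have uw: "u \<bullet> w = 0" using w0 unfolding w_def orthogonal_def by simp
  have dX: "det (X ** X) = 1" using det_orthogonal_matrix[OF oX] by (auto simp: det_mul)
  have dY: "det (Y ** Y) = 1" using det_orthogonal_matrix[OF oY] by (auto simp: det_mul)
  show ?thesis
    by (rule rot_comm_unit[OF orthogonal_matrix_mul[OF oX oX] dX _ orthogonal_matrix_mul[OF oY oY] dY _ u w uw])
       (simp_all add: matrix_vector_mul_assoc[symmetric] Xu Yu)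
qed

definition mA :: "real^3^3" where "mA = vector [vector [0,0,1], vector [1,0,0], vector [0,1,0]]"
definition mB :: "real^3^3" where "mB = vector [vector [0,0,1], vector [-1,0,0], vector [0,-1,0]]"

lemma mA_mv: "mA *v x = vector [x$3, x$1, x$2]"
  by (simp add: mA_def vec_eq_iff forall_3 matrix_vector_mult_def sum_3 vector_3)
lemma mB_mv: "mB *v x = vector [x$3, - x$1, - x$2]"
  by (simp add: mB_def vec_eq_iff forall_3 matrix_vector_mult_def sum_3 vector_3)

lemma vec3_eq: "(vector [a,b,c] :: real^3) = vector [d,e,f] \<longleftrightarrow> a = d \<and> b = e \<and> c = f"
  by (simp add: vec_eq_iff forall_3 vector_3)

lemma orth_mA: "orthogonal_matrix mA"
  by (simp add: orthogonal_matrix_def mA_def vec_eq_iff forall_3 matrix_matrix_mult_def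
       transpose_def mat_def sum_3 vector_3)
lemma orth_mB: "orthogonal_matrix mB"
  by (simp add: orthogonal_matrix_def mB_def vec_eq_iff forall_3 matrix_matrix_mult_def
       transpose_def mat_def sum_3 vector_3)
lemma det_mA: "det mA = 1" by (simp add: mA_def det_3 vector_3)
lemma det_mB: "det mB = 1" by (simp add: mB_def det_3 vector_3)

lemma cube_mA: "(\<lambda>x. mA *v x) ` cube = cube"
proof
  show "(\<lambda>x. mA *v x) ` cube \<subseteq> cube"
    by (auto simp: cube_def mA_mv forall_3 vector_3)
  show "cube \<subseteq> (\<lambda>x. mA *v x) ` cube"
  proof
    fix y assume y: "y \<in> cube"
    have "y = mA *v vector [y$2, y$3, y$1]" by (simp add: mA_mv vec_eq_iff forall_3 vector_3)
    moreover have "vector [y$2, y$3, y$1] \<in> cube" using y by (auto simp: cube_def forall_3 vector_3)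
    ultimately show "y \<in> (\<lambda>x. mA *v x) ` cube" by blast
  qed
qed

lemma cube_mB: "(\<lambda>x. mB *v x) ` cube = cube"
proof
  show "(\<lambda>x. mB *v x) ` cube \<subseteq> cube"
    by (auto simp: cube_def mB_mv forall_3 vector_3)
  show "cube \<subseteq> (\<lambda>x. mB *v x) ` cube"
  proof
    fix y assume y: "y \<in> cube"
    have "y = mB *v vector [- y$2, - y$3, y$1]" by (simp add: mB_mv vec_eq_iff forall_3 vector_3)
    moreover have "vector [- y$2, - y$3, y$1] \<in> cube" using y by (auto simp: cube_def forall_3 vector_3)
    ultimately show "y \<in> (\<lambda>x. mB *v x) ` cube" by blast
  qed
qed

lemma tetra_mA: "(\<lambda>x. mA *v x) ` tetra_vertices = tetra_vertices"
  by (auto simp: tetra_vertices_def mA_mv vector_3 vec3_eq)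
lemma tetra_mB: "(\<lambda>x. mB *v x) ` tetra_vertices = tetra_vertices"
  by (auto simp: tetra_vertices_def mB_mv vector_3 vec3_eq)

lemma mem_all: "mA \<in> pg_O" "mB \<in> pg_O" "mA \<in> pg_Oh" "mB \<in> pg_Oh" "mA \<in> pg_Td" "mB \<in> pg_Td"
  by (simp_all add: pg_O_def pg_Oh_def pg_Td_def orth_mA orth_mB det_mA det_mB cube_mA cube_mB
      tetra_mA tetra_mB)

lemma noncomm: "((mA ** mA) ** (mA ** mA)) ** ((mB ** mB) ** (mB ** mB)) \<noteq>
                ((mB ** mB) ** (mB ** mB)) ** ((mA ** mA) ** (mA ** mA))"
proof
  assume h: "((mA ** mA) ** (mA ** mA)) ** ((mB ** mB) ** (mB ** mB)) =
                ((mB ** mB) ** (mB ** mB)) ** ((mA ** mA) ** (mA ** mA))"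
  have "(((mA ** mA) ** (mA ** mA)) ** ((mB ** mB) ** (mB ** mB))) *v vector [0,1,0] =
        (((mB ** mB) ** (mB ** mB)) ** ((mA ** mA) ** (mA ** mA))) *v vector [0,1,0]"
    by (simp only: h)
  then show False
    by (simp add: matrix_vector_mul_assoc[symmetric] mA_mv mB_mv vector_3 vec3_eq)
qed



lemma aff_fix:
  assumes "affine_isometry h" "h q = q"
  shows "\<exists>A. orthogonal_matrix A \<and> (\<forall>x. h x = A *v (x - q) + q)"
proof -
  obtain A t where A: "orthogonal_matrix A" "\<forall>x. h x = A *v x + t"
    using assms(1) unfolding affine_isometry_def by blast
  have t: "t = q - A *v q" using A(2) assms(2) by (metis add_diff_cancel_left')
  show ?thesis using A t by (auto simp: matrix_vector_mult_diff_distrib)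
qed

lemma sq_comm_aff:
  assumes "affine_isometry h1" "h1 q = q" "h1 q0 = q0"
    and "affine_isometry h2" "h2 q = q" "h2 q0 = q0" and "q0 \<noteq> q"
  shows "(h1 \<circ> h1) \<circ> (h2 \<circ> h2) = (h2 \<circ> h2) \<circ> (h1 \<circ> h1)"
proof -
  obtain X where X: "orthogonal_matrix X" "\<forall>x. h1 x = X *v (x - q) + q"
    using aff_fix[OF assms(1,2)] by blast
  obtain Y where Y: "orthogonal_matrix Y" "\<forall>x. h2 x = Y *v (x - q) + q"
    using aff_fix[OF assms(4,5)] by blast
  have Xv: "X *v (q0 - q) = q0 - q" using X(2) assms(3) by (metis add_diff_cancel_right')
  have Yv: "Y *v (q0 - q) = q0 - q" using Y(2) assms(6) by (metis add_diff_cancel_right')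
  have c: "(X ** X) ** (Y ** Y) = (Y ** Y) ** (X ** X)"
    using sq_comm[OF X(1) Xv Y(1) Yv] assms(7) by simp
  show ?thesis
  proof
    fix x
    have "((h1 \<circ> h1) \<circ> (h2 \<circ> h2)) x = ((X ** X) ** (Y ** Y)) *v (x - q) + q"
      using X(2) Y(2) by (simp add: matrix_vector_mul_assoc[symmetric])
    also have "\<dots> = ((Y ** Y) ** (X ** X)) *v (x - q) + q" using c by simp
    also have "\<dots> = ((h2 \<circ> h2) \<circ> (h1 \<circ> h1)) x"
      using X(2) Y(2) by (simp add: matrix_vector_mul_assoc[symmetric])
    finally show "((h1 \<circ> h1) \<circ> (h2 \<circ> h2)) x = ((h2 \<circ> h2) \<circ> (h1 \<circ> h1)) x" .
  qed
qed



lemma site_group: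
  assumes "space_group G"
  shows "group (fg (site G q))"
proof (rule groupI)
  show "\<And>x y. x \<in> carrier (fg (site G q)) \<Longrightarrow> y \<in> carrier (fg (site G q)) \<Longrightarrow>
      x \<otimes>\<^bsub>fg (site G q)\<^esub> y \<in> carrier (fg (site G q))"
    using assms by (auto simp: fg_def site_def space_group_def)
  show "\<one>\<^bsub>fg (site G q)\<^esub> \<in> carrier (fg (site G q))"
    using assms by (auto simp: fg_def site_def space_group_def)
  show "\<And>x y z. x \<in> carrier (fg (site G q)) \<Longrightarrow> y \<in> carrier (fg (site G q)) \<Longrightarrow>
      z \<in> carrier (fg (site G q)) \<Longrightarrow>
      x \<otimes>\<^bsub>fg (site G q)\<^esub> y \<otimes>\<^bsub>fg (site G q)\<^esub> z =
      x \<otimes>\<^bsub>fg (site G q)\<^esub> (y \<otimes>\<^bsub>fg (site G q)\<^esub> z)"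
    by (simp add: fg_def o_assoc)
  show "\<And>x. x \<in> carrier (fg (site G q)) \<Longrightarrow> \<one>\<^bsub>fg (site G q)\<^esub> \<otimes>\<^bsub>fg (site G q)\<^esub> x = x"
    by (simp add: fg_def)
  show "\<exists>y\<in>carrier (fg (site G q)). y \<otimes>\<^bsub>fg (site G q)\<^esub> x = \<one>\<^bsub>fg (site G q)\<^esub>"
    if x: "x \<in> carrier (fg (site G q))" for x
  proof -
    have xG: "x \<in> G" "x q = q" using x by (auto simp: fg_def site_def)
    obtain h where h: "h \<in> G" "x \<circ> h = id" "h \<circ> x = id"
      using assms xG unfolding space_group_def by blast
    have "h q = q" using h(3) xG(2) by (metis comp_apply id_apply)
    then show ?thesis using h by (auto simp: fg_def site_def)
  qed
qed



lemma (in group) idx2_sq: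
  assumes H: "subgroup H G" and c: "card (rcosets H) = 2" and k: "k \<in> carrier G"
  shows "k \<otimes> k \<in> H"
proof (rule ccontr)
  assume nkk: "k \<otimes> k \<notin> H"
  have fin: "finite (rcosets H)" 
  proof (rule ccontr)
    assume "infinite (rcosets H)"
    then have "card (rcosets H) = 0" by (rule card.infinite)
    with c show False by simp
  qed
  have kk: "k \<otimes> k \<in> carrier G" using k by (rule m_closed[OF k])
  have Hc: "H \<subseteq> carrier G" by (rule subgroup.subset[OF H])
  have nk: "k \<notin> H"
  proof
    assume kH: "k \<in> H" then have "k \<otimes> k \<in> H" by (rule subgroup.m_closed[OF H kH])
    with nkk show False by simp
  qed
  have r1: "H \<in> rcosets H"
    using rcosetsI[OF Hc one_closed] coset_mult_one[OF Hc] by simp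
  have r2: "H #> k \<in> rcosets H" by (rule rcosetsI[OF Hc k])
  have r3: "H #> (k \<otimes> k) \<in> rcosets H" by (rule rcosetsI[OF Hc kk])
  have s1: "k \<in> H #> k" by (rule rcos_self[OF k H])
  have s2: "k \<otimes> k \<in> H #> (k \<otimes> k)" by (rule rcos_self[OF kk H])
  have d12: "H \<noteq> H #> k" proof assume "H = H #> k" with s1 nk show False by simp qed
  have d13: "H \<noteq> H #> (k \<otimes> k)" proof assume "H = H #> (k \<otimes> k)" with s2 nkk show False by simp qed
  have d23: "H #> k \<noteq> H #> (k \<otimes> k)"
  proof
    assume e: "H #> k = H #> (k \<otimes> k)"
    have "k \<otimes> k \<in> H #> k" using s2 unfolding e .
    then obtain h where h: "h \<in> H" "k \<otimes> k = h \<otimes> k" unfolding r_coset_def by auto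
    then have "k = h" using right_cancel[of k k h] k h(1) Hc by auto
    with h nk show False by simp
  qed
  have "{H, H #> k, H #> (k \<otimes> k)} \<subseteq> rcosets H" using r1 r2 r3 by auto
  then have "card {H, H #> k, H #> (k \<otimes> k)} \<le> card (rcosets H)" by (rule card_mono[OF fin])
  then show False using c d12 d13 d23 by simp
qed





lemma (in group) rcosets_carrier: "card (rcosets (carrier G)) = 1"
proof -
  have e: "\<And>a. a \<in> carrier G \<Longrightarrow> carrier G #> a = carrier G"
    by (rule subgroup.rcos_const[OF subgroup_self is_group])
  have "rcosets (carrier G) = {carrier G}"
  proof
    show "rcosets (carrier G) \<subseteq> {carrier G}" unfolding RCOSETS_def using e by blast
    show "{carrier G} \<subseteq> rcosets (carrier G)" unfolding RCOSETS_def using e one_closed by blast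
  qed
  then show ?thesis by simp
qed

lemma hom4:
  assumes hm: "\<And>x y. x \<in> K \<Longrightarrow> y \<in> K \<Longrightarrow> f (x \<circ> y) = f x ** f y"
    and cl: "\<And>x y. x \<in> K \<Longrightarrow> y \<in> K \<Longrightarrow> x \<circ> y \<in> K"
    and a: "a \<in> K" and b: "b \<in> K"
  shows "f (((a \<circ> a) \<circ> (a \<circ> a)) \<circ> ((b \<circ> b) \<circ> (b \<circ> b))) =
         ((f a ** f a) ** (f a ** f a)) ** ((f b ** f b) ** (f b ** f b))"
  by (simp add: hm cl a b)




theorem mainTheorem6:
  fixes G :: "(real^3 \<Rightarrow> real^3) set" and q :: "real^3"
  assumes "space_group G"
    and "maximal_site G q"
    and "fg (site G q) \<cong> mgrp pg_O \<or> fg (site G q) \<cong> mgrp pg_Td \<or> fg (site G q) \<cong> mgrp pg_Oh"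
  shows "\<not> (\<exists>q0::real^3. subgroup (site G q0) (fg (site G q)) \<and>
                        card (rcosets\<^bsub>fg (site G q)\<^esub> (site G q0)) = 2)"
proof
  assume "\<exists>q0::real^3. subgroup (site G q0) (fg (site G q)) \<and>
                        card (rcosets\<^bsub>fg (site G q)\<^esub> (site G q0)) = 2"
  then obtain q0 where sub: "subgroup (site G q0) (fg (site G q))"
    and c2: "card (rcosets\<^bsub>fg (site G q)\<^esub> (site G q0)) = 2" by blast
  define K where "K = site G q"
  define H where "H = site G q0"
  have grp: "group (fg K)" unfolding K_def by (rule site_group[OF assms(1)])
  have cK: "carrier (fg K) = K" by (simp add: fg_def)
  have mK: "\<And>a b. a \<otimes>\<^bsub>fg K\<^esub> b = a \<circ> b" by (simp add: fg_def)
  have sub': "subgroup H (fg K)" using sub unfolding H_def K_def .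
  have c2': "card (rcosets\<^bsub>fg K\<^esub> H) = 2" using c2 unfolding H_def K_def .
  have HK: "H \<subseteq> K" using subgroup.subset[OF sub'] cK by simp
  have qq: "q0 \<noteq> q"
  proof
    assume "q0 = q"
    then have "H = carrier (fg K)" using cK unfolding H_def K_def by simp
    then have "card (rcosets\<^bsub>fg K\<^esub> (carrier (fg K))) = 2" using c2' by simp
    with group.rcosets_carrier[OF grp] show False by simp
  qed
  have sqH: "a \<circ> a \<in> H" if "a \<in> K" for a
    using group.idx2_sq[OF grp sub' c2', of a] that cK mK by simp
  have affG: "\<And>g. g \<in> G \<Longrightarrow> affine_isometry g" using assms(1) unfolding space_group_def by blast
  have inH: "g \<in> G" "g q = q" "g q0 = q0" if "g \<in> H" for g
    using that HK unfolding H_def K_def site_def by blast+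
  have comm: "((a \<circ> a) \<circ> (a \<circ> a)) \<circ> ((b \<circ> b) \<circ> (b \<circ> b)) =
              ((b \<circ> b) \<circ> (b \<circ> b)) \<circ> ((a \<circ> a) \<circ> (a \<circ> a))" if "a \<in> K" "b \<in> K" for a b
  proof -
    have aH: "a \<circ> a \<in> H" and bH: "b \<circ> b \<in> H" using sqH that by auto
    show ?thesis
      by (rule sq_comm_aff[OF affG[OF inH(1)[OF aH]] inH(2,3)[OF aH]
                              affG[OF inH(1)[OF bH]] inH(2,3)[OF bH] qq])
  qed
  have cl: "x \<circ> y \<in> K" if "x \<in> K" "y \<in> K" for x y
  proof -
    have "x \<otimes>\<^bsub>fg K\<^esub> y \<in> carrier (fg K)"
      by (rule monoid.m_closed[OF group.is_monoid[OF grp]]) (simp_all add: cK that)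
    then show ?thesis by (simp add: cK mK)
  qed
  obtain P where P: "fg K \<cong> mgrp P" "mA \<in> P" "mB \<in> P"
  proof -
    consider "fg K \<cong> mgrp pg_O" | "fg K \<cong> mgrp pg_Td" | "fg K \<cong> mgrp pg_Oh"
      using assms(3) unfolding K_def by fast
    then show ?thesis
    proof cases
      case 1 then show ?thesis using that mem_all by fast
    next
      case 2 then show ?thesis using that mem_all by fast
    next
      case 3 then show ?thesis using that mem_all by fast
    qed
  qed
  obtain f where f: "f \<in> iso (fg K) (mgrp P)" using P(1) unfolding is_iso_def by fast
  have fh: "f \<in> hom (fg K) (mgrp P)" using f unfolding iso_def by simp
  have fb: "bij_betw f K P" using f unfolding iso_def by (simp add: fg_def mgrp_def)
  have hm: "\<And>x y. x \<in> K \<Longrightarrow> y \<in> K \<Longrightarrow> f (x \<circ> y) = f x ** f y"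
    using hom_mult[OF fh] cK mK by (simp add: mgrp_def)
  have fK: "f ` K = P" using fb unfolding bij_betw_def by simp
  obtain a where a: "a \<in> K" "f a = mA" using P(2) unfolding fK[symmetric] by (rule imageE) simp
  obtain b where b: "b \<in> K" "f b = mB" using P(3) unfolding fK[symmetric] by (rule imageE) simp
  have "f (((a \<circ> a) \<circ> (a \<circ> a)) \<circ> ((b \<circ> b) \<circ> (b \<circ> b))) =
        f (((b \<circ> b) \<circ> (b \<circ> b)) \<circ> ((a \<circ> a) \<circ> (a \<circ> a)))" using comm[OF a(1) b(1)] by simp
  then show False using hom4[of K f, OF hm cl a(1) b(1)] hom4[of K f, OF hm cl b(1) a(1)] a b noncomm
    by simp
qed


end
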